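(* Let $\mathfrak D$ be an admissible domain with cover $\tilde{\mathfrak D}$, $T>0$, and let $\bm\varphi\in C^1([0,T];C^1(\mathbf{Cl}\tilde{\mathfrak D};\mathbb R^3))\cap C([0,T];C^2(\mathbf{Cl}\tilde{\mathfrak D};\mathbb R^3))$ satisfy $\bm\varphi(0,\bar{\bm x})=\bar{\bm x}$ for all $\bar{\bm x}\in\tilde{\mathfrak D}$. Let $\mathfrak O,\mathfrak O_0,\mathfrak O_1$ be connected open subsets of $\mathbb R^3$ with $\mathfrak B_0\subset\mathfrak O_0\Subset\mathfrak O\Subset\mathfrak O_1\Subset\tilde{\mathfrak D}$ and $\mathfrak O_1$ convex. Then for a sufficiently small $T_1\in\,]0,T[$ there is a mapping $\bm\psi(t,\cdot):\mathfrak O\to\mathfrak O_1$, $t\in[0,T_1]$, such that $\bm x=\bm\varphi(t,\bm\psi(t,\bm x))$ for all $(t,\bm x)\in[0,T_1]\times\mathfrak O$, and moreover $\mathfrak O_0\subset\bm\psi(t,\mathfrak O)$ for all $t\in[0,T_1]$.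
   Context: $\mathfrak B_0=\{\bm x\in\mathbb R^3:\|\bm x\|\le R_0\}$ with $R_0>0$. An admissible domain is an open connected $\mathfrak D\subset\mathbb R^3$ such that $\tilde{\mathfrak D}=\mathfrak D\cup\mathfrak B_0$ (its cover) is open and connected, $\mathfrak D=\tilde{\mathfrak D}\setminus\mathfrak B_0$, and $\partial\mathfrak D$ is smooth. $A\Subset B$ means $\mathbf{Cl}A$ is a compact subset of $B$. *)

theory Defs
  imports "HOL-Analysis.Analysis"
begin

type_synonym R3 = "real^3"

definition B0 :: "real \<Rightarrow> R3 set" where
  "B0 R0 = cball 0 R0"

definition compactly_contained :: "R3 set \<Rightarrow> R3 set \<Rightarrow> bool" (infix "\<Subset>" 50) where
  "A \<Subset> B \<longleftrightarrow> compact (closure A) \<and> closure A \<subseteq> B"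

fun iter_pd :: "3 list \<Rightarrow> (R3 \<Rightarrow> real) \<Rightarrow> R3 \<Rightarrow> real" where
  "iter_pd [] g = g"
| "iter_pd (i # is) g = (\<lambda>x. frechet_derivative (iter_pd is g) (at x) (axis i 1))"

definition smooth_on_R3 :: "R3 set \<Rightarrow> (R3 \<Rightarrow> real) \<Rightarrow> bool" where
  "smooth_on_R3 U g \<longleftrightarrow> (\<forall>is. (iter_pd is g) differentiable_on U)"

definition smooth_boundary :: "R3 set \<Rightarrow> bool" where
  "smooth_boundary D \<longleftrightarrow>
     (\<forall>p\<in>frontier D. \<exists>U g. open U \<and> p \<in> U \<and> smooth_on_R3 U g \<and>
        (\<forall>x\<in>U. frechet_derivative g (at x) \<noteq> (\<lambda>v. 0)) \<and>
        D \<inter> U = {x\<in>U. g x < 0})"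

definition cover :: "real \<Rightarrow> R3 set \<Rightarrow> R3 set" where
  "cover R0 D = D \<union> B0 R0"

definition admissible :: "real \<Rightarrow> R3 set \<Rightarrow> bool" where
  "admissible R0 D \<longleftrightarrow> open D \<and> connected D \<and> open (cover R0 D) \<and> connected (cover R0 D)
     \<and> D = cover R0 D - B0 R0 \<and> smooth_boundary D"

definition D1 :: "(R3 \<Rightarrow> R3) \<Rightarrow> R3 \<Rightarrow> (R3 \<Rightarrow>\<^sub>L R3)" where
  "D1 f x = Blinfun (frechet_derivative f (at x))"

definition D2 :: "(R3 \<Rightarrow> R3) \<Rightarrow> R3 \<Rightarrow> (R3 \<Rightarrow>\<^sub>L (R3 \<Rightarrow>\<^sub>L R3))" where
  "D2 f x = Blinfun (frechet_derivative (D1 f) (at x))"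

text \<open>C^1(Cl Omega) and C^2(Cl Omega) (Omega open): derivatives up to the given order exist in
  Omega and are bounded and uniformly continuous there (hence extend continuously to the closure).\<close>
definition C1cl :: "R3 set \<Rightarrow> (R3 \<Rightarrow> R3) set" where
  "C1cl \<Omega> = {f. (\<forall>x\<in>\<Omega>. f differentiable (at x)) \<and>
      bounded (f ` \<Omega>) \<and> uniformly_continuous_on \<Omega> f \<and>
      bounded (D1 f ` \<Omega>) \<and> uniformly_continuous_on \<Omega> (D1 f)}"

definition C2cl :: "R3 set \<Rightarrow> (R3 \<Rightarrow> R3) set" where
  "C2cl \<Omega> = {f. f \<in> C1cl \<Omega> \<and> (\<forall>x\<in>\<Omega>. D1 f differentiable (at x)) \<and>
      bounded (D2 f ` \<Omega>) \<and> uniformly_continuous_on \<Omega> (D2 f)}"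

definition normC1 :: "R3 set \<Rightarrow> (R3 \<Rightarrow> R3) \<Rightarrow> real" where
  "normC1 \<Omega> f = (SUP x\<in>\<Omega>. norm (f x)) + (SUP x\<in>\<Omega>. norm (D1 f x))"

definition normC2 :: "R3 set \<Rightarrow> (R3 \<Rightarrow> R3) \<Rightarrow> real" where
  "normC2 \<Omega> f = normC1 \<Omega> f + (SUP x\<in>\<Omega>. norm (D2 f x))"

definition C0_time_C2 :: "real \<Rightarrow> R3 set \<Rightarrow> (real \<Rightarrow> R3 \<Rightarrow> R3) \<Rightarrow> bool" where
  "C0_time_C2 T \<Omega> \<phi> \<longleftrightarrow>
     (\<forall>t\<in>{0..T}. \<phi> t \<in> C2cl \<Omega>) \<and>
     (\<forall>t\<in>{0..T}. ((\<lambda>s. normC2 \<Omega> (\<lambda>x. \<phi> s x - \<phi> t x)) \<longlongrightarrow> 0) (at t within {0..T}))"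

definition C1_time_C1 :: "real \<Rightarrow> R3 set \<Rightarrow> (real \<Rightarrow> R3 \<Rightarrow> R3) \<Rightarrow> bool" where
  "C1_time_C1 T \<Omega> \<phi> \<longleftrightarrow>
     (\<exists>\<phi>'. (\<forall>t\<in>{0..T}. \<phi> t \<in> C1cl \<Omega> \<and> \<phi>' t \<in> C1cl \<Omega>) \<and>
       (\<forall>t\<in>{0..T}. ((\<lambda>s. normC1 \<Omega> (\<lambda>x. \<phi> s x - \<phi> t x - (s - t) *\<^sub>R \<phi>' t x) / \<bar>s - t\<bar>)
           \<longlongrightarrow> 0) (at t within {0..T})) \<and>
       (\<forall>t\<in>{0..T}. ((\<lambda>s. normC1 \<Omega> (\<lambda>x. \<phi>' s x - \<phi>' t x)) \<longlongrightarrow> 0) (at t within {0..T})))"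

end

theory Submission
  imports Defs
begin

lemma Blinfun_fd_diff:
  fixes f g :: "'a::real_normed_vector \<Rightarrow> 'b::real_normed_vector"
  assumes "f differentiable at x" "g differentiable at x"
  shows "Blinfun (frechet_derivative (\<lambda>y. f y - g y) (at x)) =
         Blinfun (frechet_derivative f (at x)) - Blinfun (frechet_derivative g (at x))"
proof -
  have F: "(f has_derivative frechet_derivative f (at x)) (at x)"
   and G: "(g has_derivative frechet_derivative g (at x)) (at x)"
    using assms frechet_derivative_works by blast+
  have hd: "((\<lambda>y. f y - g y) has_derivative (\<lambda>v. frechet_derivative f (at x) v - frechet_derivative g (at x) v)) (at x)"
    using has_derivative_diff[OF F G] .
  have e: "frechet_derivative (\<lambda>y. f y - g y) (at x) = (\<lambda>v. frechet_derivative f (at x) v - frechet_derivative g (at x) v)"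
    using frechet_derivative_at[OF hd] by (rule sym)
  have bf: "bounded_linear (frechet_derivative f (at x))" using F has_derivative_bounded_linear by blast
  have bg: "bounded_linear (frechet_derivative g (at x))" using G has_derivative_bounded_linear by blast
  have bd: "bounded_linear (\<lambda>v. frechet_derivative f (at x) v - frechet_derivative g (at x) v)"
    using bounded_linear_sub[OF bf bg] .
  show ?thesis unfolding e
    by (rule blinfun_eqI) (simp add: bounded_linear_Blinfun_apply[OF bd] bounded_linear_Blinfun_apply[OF bf]
        bounded_linear_Blinfun_apply[OF bg] blinfun.diff_left)
qed

lemma D1_diff:
  assumes "f differentiable at x" "g differentiable at x"
  shows "D1 (\<lambda>y. f y - g y) x = D1 f x - D1 g x"
  unfolding D1_def using Blinfun_fd_diff[OF assms] .

lemma D1_id: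
  assumes "open \<Omega>" "x \<in> \<Omega>" "\<forall>y\<in>\<Omega>. f y = y"
  shows "D1 f x = id_blinfun"
proof -
  have "frechet_derivative (\<lambda>y. y) (at x) = frechet_derivative f (at x)"
    by (rule frechet_derivative_transform_within_open[OF _ assms(1,2)]) (use assms(3) in auto)
  moreover have "frechet_derivative (\<lambda>y. y) (at x) = (\<lambda>v. v)"
    using frechet_derivative_at[OF has_derivative_ident] by (rule sym)
  ultimately have e: "frechet_derivative f (at x) = (\<lambda>v. v)" by simp
  have "Blinfun (\<lambda>v. v) = id_blinfun"
    by (rule blinfun_eqI) (simp add: bounded_linear_Blinfun_apply bounded_linear_ident)
  thus ?thesis unfolding D1_def e .
qed

lemma D2_diff:
  assumes "open \<Omega>" "x \<in> \<Omega>" "\<forall>y\<in>\<Omega>. f differentiable at y" "\<forall>y\<in>\<Omega>. g differentiable at y"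
    "D1 f differentiable at x" "D1 g differentiable at x"
  shows "D2 (\<lambda>y. f y - g y) x = D2 f x - D2 g x"
proof -
  have dd: "(\<lambda>y. D1 f y - D1 g y) differentiable at x" using assms(5,6) by auto
  have "frechet_derivative (\<lambda>y. D1 f y - D1 g y) (at x) = frechet_derivative (D1 (\<lambda>y. f y - g y)) (at x)"
    by (rule frechet_derivative_transform_within_open[OF dd assms(1,2)]) (use assms(3,4) D1_diff in auto)
  hence "D2 (\<lambda>y. f y - g y) x = Blinfun (frechet_derivative (\<lambda>y. D1 f y - D1 g y) (at x))"
    unfolding D2_def by simp
  also have "\<dots> = D2 f x - D2 g x" unfolding D2_def by (rule Blinfun_fd_diff[OF assms(5,6)])
  finally show ?thesis .
qed

lemma normC2_bound:
  assumes "x \<in> \<Omega>" "bounded (f ` \<Omega>)" "bounded (D1 f ` \<Omega>)" "bounded (D2 f ` \<Omega>)"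
  shows "norm (f x) \<le> normC2 \<Omega> f \<and> norm (D1 f x) \<le> normC2 \<Omega> f"
proof -
  have bb: "bdd_above ((\<lambda>x. norm (h x)) ` \<Omega>)" if "bounded (h ` \<Omega>)" for h :: "R3 \<Rightarrow> 'b::real_normed_vector"
  proof -
    from that obtain a where "\<forall>y\<in>h ` \<Omega>. norm y \<le> a" unfolding bounded_iff by blast
    thus ?thesis by (auto simp: bdd_above_def)
  qed
  have s1: "norm (f x) \<le> (SUP x\<in>\<Omega>. norm (f x))" by (rule cSUP_upper[OF assms(1) bb[OF assms(2)]])
  have s2: "norm (D1 f x) \<le> (SUP x\<in>\<Omega>. norm (D1 f x))" by (rule cSUP_upper[OF assms(1) bb[OF assms(3)]])
  have s3: "norm (D2 f x) \<le> (SUP x\<in>\<Omega>. norm (D2 f x))" by (rule cSUP_upper[OF assms(1) bb[OF assms(4)]])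
  have "0 \<le> norm (f x)" "0 \<le> norm (D1 f x)" "0 \<le> norm (D2 f x)" by auto
  thus ?thesis using s1 s2 s3 unfolding normC2_def normC1_def by linarith
qed

lemma core_lip:
  fixes F :: "R3 \<Rightarrow> R3"
  assumes "open \<Omega>" "O1 \<subseteq> \<Omega>" "convex O1" "\<forall>x\<in>\<Omega>. F differentiable at x"
    "\<forall>x\<in>\<Omega>. norm (D1 F x - id_blinfun) \<le> 1/2" "a \<in> O1" "b \<in> O1"
  shows "norm ((a - F a) - (b - F b)) \<le> 1/2 * norm (a - b)"
proof (rule differentiable_bound[OF assms(3) _ _ assms(6,7), where f' = "\<lambda>z. blinfun_apply (id_blinfun - D1 F z)"])
  fix z assume z: "z \<in> O1"
  hence zz: "z \<in> \<Omega>" using assms(2) by auto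
  have Fd: "(F has_derivative frechet_derivative F (at z)) (at z)"
    using assms(4) zz frechet_derivative_works by blast
  have bl: "bounded_linear (frechet_derivative F (at z))" using Fd has_derivative_bounded_linear by blast
  have eq: "blinfun_apply (D1 F z) = frechet_derivative F (at z)"
    by (rule ext) (simp add: D1_def bounded_linear_Blinfun_apply[OF bl])
  have "((\<lambda>z. z - F z) has_derivative (\<lambda>v. v - frechet_derivative F (at z) v)) (at z)"
    using has_derivative_diff[OF has_derivative_ident Fd] .
  moreover have "blinfun_apply (id_blinfun - D1 F z) = (\<lambda>v. v - frechet_derivative F (at z) v)"
    by (rule ext) (simp add: blinfun.diff_left eq)
  ultimately have "((\<lambda>z. z - F z) has_derivative blinfun_apply (id_blinfun - D1 F z)) (at z)"
    by simp
  thus "((\<lambda>z. z - F z) has_derivative blinfun_apply (id_blinfun - D1 F z)) (at z within O1)"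
    by (rule has_derivative_at_withinI)
  have "onorm (blinfun_apply (id_blinfun - D1 F z)) = norm (D1 F z - id_blinfun)"
    by (simp add: norm_blinfun.rep_eq[symmetric] norm_minus_commute)
  thus "onorm (blinfun_apply (id_blinfun - D1 F z)) \<le> 1/2" using assms(5) zz by simp
qed

lemma core_inj:
  fixes F :: "R3 \<Rightarrow> R3"
  assumes "open \<Omega>" "O1 \<subseteq> \<Omega>" "convex O1" "\<forall>x\<in>\<Omega>. F differentiable at x"
    "\<forall>x\<in>\<Omega>. norm (D1 F x - id_blinfun) \<le> 1/2" "a \<in> O1" "b \<in> O1" "F a = F b"
  shows "a = b"
proof -
  have "norm ((a - F a) - (b - F b)) \<le> 1/2 * norm (a - b)" by (rule core_lip[OF assms(1-7)])
  hence "norm (a - b) \<le> 1/2 * norm (a - b)" using assms(8) by simp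
  thus ?thesis by simp
qed

lemma core_ex:
  fixes F :: "R3 \<Rightarrow> R3"
  assumes "open \<Omega>" "O1 \<subseteq> \<Omega>" "convex O1" "\<forall>x\<in>\<Omega>. F differentiable at x"
    "\<forall>x\<in>\<Omega>. norm (D1 F x - id_blinfun) \<le> 1/2"
    "\<forall>x\<in>\<Omega>. norm (F x - x) \<le> \<delta>" "\<delta> \<le> r/2" "r > 0" "cball y r \<subseteq> O1"
  shows "\<exists>z\<in>O1. F z = y"
proof -
  let ?g = "\<lambda>z. z + y - F z"
  have y1: "y \<in> O1" using assms(8,9) by auto
  have lip: "dist (?g a) (?g b) \<le> 1/2 * dist a b" if "a \<in> cball y r" "b \<in> cball y r" for a b
  proof -
    have "norm ((a - F a) - (b - F b)) \<le> 1/2 * norm (a - b)"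
      by (rule core_lip[OF assms(1-5)]) (use that assms(9) in auto)
    moreover have "dist (?g a) (?g b) = norm ((a - F a) - (b - F b))"
      unfolding dist_norm by (rule arg_cong[where f=norm]) (simp add: algebra_simps)
    ultimately show ?thesis by (simp add: dist_norm)
  qed
  have maps: "?g ` cball y r \<subseteq> cball y r"
  proof
    fix w assume "w \<in> ?g ` cball y r"
    then obtain z where z: "z \<in> cball y r" "w = ?g z" by auto
    have "dist (?g z) (?g y) \<le> 1/2 * dist z y" by (rule lip[OF z(1)]) (use assms(8) in simp)
    also have "\<dots> \<le> r/2" using z(1) by (simp add: dist_commute)
    finally have a1: "dist (?g z) (?g y) \<le> r/2" .
    have "dist (?g y) y = norm (F y - y)" by (simp add: dist_norm norm_minus_commute)
    also have "\<dots> \<le> \<delta>" using assms(6,2) y1 by auto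
    finally have "dist (?g y) y \<le> r/2" using assms(7) by simp
    hence "dist y (?g z) \<le> r" using a1 dist_triangle[of y "?g z" "?g y"] by (simp add: dist_commute)
    thus "w \<in> cball y r" using z(2) by simp
  qed
  have "\<exists>!z\<in>cball y r. ?g z = z"
    by (rule Banach_fix[OF _ _ _ _ maps lip]) (use assms(8) complete_eq_closed in auto)
  then obtain z where "z \<in> cball y r" "?g z = z" by auto
  thus ?thesis using assms(9) by (intro bexI[of _ z]) (auto simp: algebra_simps)
qed


theorem proposition2:
  fixes R0 T :: real and D \<O> \<O>0 \<O>1 :: "R3 set" and \<phi> :: "real \<Rightarrow> R3 \<Rightarrow> R3"
  assumes "R0 > 0"
    and "admissible R0 D"
    and "T > 0"
    and "C1_time_C1 T (cover R0 D) \<phi>"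
    and "C0_time_C2 T (cover R0 D) \<phi>"
    and "\<forall>x\<in>cover R0 D. \<phi> 0 x = x"
    and "open \<O>" "connected \<O>" "open \<O>0" "connected \<O>0" "open \<O>1" "connected \<O>1"
    and "B0 R0 \<subseteq> \<O>0" "\<O>0 \<Subset> \<O>" "\<O> \<Subset> \<O>1" "\<O>1 \<Subset> cover R0 D"
    and "convex \<O>1"
  shows "\<exists>T0\<in>{0<..<T}. \<forall>T1\<in>{0<..T0}. \<exists>\<psi> :: real \<Rightarrow> R3 \<Rightarrow> R3.
           (\<forall>t\<in>{0..T1}. \<psi> t ` \<O> \<subseteq> \<O>1) \<and>
           (\<forall>t\<in>{0..T1}. \<forall>x\<in>\<O>. x = \<phi> t (\<psi> t x)) \<and>
           (\<forall>t\<in>{0..T1}. \<O>0 \<subseteq> \<psi> t ` \<O>)"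
proof -
  define \<Omega> where "\<Omega> = cover R0 D"
  have o\<Omega>: "open \<Omega>" using assms(2) unfolding admissible_def \<Omega>_def by blast
  have O1\<Omega>: "\<O>1 \<subseteq> \<Omega>" using assms(16) closure_subset unfolding compactly_contained_def \<Omega>_def by blast
  have cO: "compact (closure \<O>)" "closure \<O> \<subseteq> \<O>1" using assms(15) unfolding compactly_contained_def by auto
  have cO0: "compact (closure \<O>0)" "closure \<O>0 \<subseteq> \<O>" using assms(14) unfolding compactly_contained_def by auto
  have OO1: "\<O> \<subseteq> \<O>1" using cO closure_subset by blast
  have O0O1: "\<O>0 \<subseteq> \<O>1" using cO0 closure_subset OO1 by blast
  obtain r where r: "r > 0" "(\<Union>x\<in>closure \<O>. cball x r) \<subseteq> \<O>1"
    using compact_subset_open_imp_cball_epsilon_subset[OF cO(1) assms(11) cO(2)] by blast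
  obtain e0 where e0: "e0 > 0" "(\<Union>x\<in>closure \<O>0. cball x e0) \<subseteq> \<O>"
    using compact_subset_open_imp_cball_epsilon_subset[OF cO0(1) assms(7) cO0(2)] by blast
  define \<delta> where "\<delta> = min (r/2) e0"
  define \<eta> where "\<eta> = min \<delta> (1/2)"
  have \<eta>: "\<eta> > 0" using r e0 unfolding \<eta>_def \<delta>_def by auto
  have C2: "\<forall>t\<in>{0..T}. \<phi> t \<in> C2cl \<Omega>"
    and lim: "((\<lambda>s. normC2 \<Omega> (\<lambda>x. \<phi> s x - \<phi> 0 x)) \<longlongrightarrow> 0) (at 0 within {0..T})"
    using assms(5,3) unfolding C0_time_C2_def \<Omega>_def by auto
  have "eventually (\<lambda>s. dist (normC2 \<Omega> (\<lambda>x. \<phi> s x - \<phi> 0 x)) 0 < \<eta>) (at 0 within {0..T})"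
    using tendstoD[OF lim \<eta>] .
  then obtain d where d: "d > 0"
    "\<forall>s\<in>{0..T}. s \<noteq> 0 \<and> dist s 0 < d \<longrightarrow> dist (normC2 \<Omega> (\<lambda>x. \<phi> s x - \<phi> 0 x)) 0 < \<eta>"
    unfolding eventually_at by blast
  define T0 where "T0 = min (d/2) (T/2)"
  have T0: "T0 \<in> {0<..<T}" using d(1) assms(3) unfolding T0_def by auto
  have id0: "\<forall>x\<in>\<Omega>. \<phi> 0 x = x" using assms(6) unfolding \<Omega>_def by simp
  have key: "(\<forall>x\<in>\<Omega>. \<phi> s differentiable at x) \<and> (\<forall>x\<in>\<Omega>. norm (\<phi> s x - x) \<le> \<delta>) \<and>
      (\<forall>x\<in>\<Omega>. norm (D1 (\<phi> s) x - id_blinfun) \<le> 1/2)" if s: "s \<in> {0..T0}" for s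
  proof -
    have sT: "s \<in> {0..T}" using s T0 by auto
    have Cs: "\<phi> s \<in> C2cl \<Omega>" and C0: "\<phi> 0 \<in> C2cl \<Omega>" using C2 sT assms(3) by auto
    have dfs: "\<forall>x\<in>\<Omega>. \<phi> s differentiable at x" and df0: "\<forall>x\<in>\<Omega>. \<phi> 0 differentiable at x"
      and dDs: "\<forall>x\<in>\<Omega>. D1 (\<phi> s) differentiable at x" and dD0: "\<forall>x\<in>\<Omega>. D1 (\<phi> 0) differentiable at x"
      and b1: "bounded (\<phi> s ` \<Omega>)" "bounded (\<phi> 0 ` \<Omega>)"
      and b2: "bounded (D1 (\<phi> s) ` \<Omega>)" "bounded (D1 (\<phi> 0) ` \<Omega>)"
      and b3: "bounded (D2 (\<phi> s) ` \<Omega>)" "bounded (D2 (\<phi> 0) ` \<Omega>)"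
      using Cs C0 unfolding C2cl_def C1cl_def by auto
    show ?thesis
    proof (cases "s = 0")
      case True
      thus ?thesis using id0 D1_id[OF o\<Omega> _ id0] dfs r e0 unfolding \<delta>_def by auto
    next
      case False
      define f where "f = (\<lambda>x. \<phi> s x - \<phi> 0 x)"
      have n: "normC2 \<Omega> f < \<eta>" using d(2) sT False s unfolding T0_def f_def by auto
      have bf: "bounded (f ` \<Omega>)" unfolding f_def using bounded_minus_comp[OF b1] .
      have D1f: "D1 f x = D1 (\<phi> s) x - D1 (\<phi> 0) x" if "x \<in> \<Omega>" for x
        unfolding f_def using D1_diff dfs df0 that by blast
      have D2f: "D2 f x = D2 (\<phi> s) x - D2 (\<phi> 0) x" if "x \<in> \<Omega>" for x
        unfolding f_def using D2_diff[OF o\<Omega> that dfs df0] dDs dD0 that by blast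
      have bD1: "bounded (D1 f ` \<Omega>)"
      proof -
        have "D1 f ` \<Omega> = (\<lambda>x. D1 (\<phi> s) x - D1 (\<phi> 0) x) ` \<Omega>" using D1f by (rule image_cong[OF refl])
        thus ?thesis using bounded_minus_comp[OF b2] by simp
      qed
      have bD2: "bounded (D2 f ` \<Omega>)"
      proof -
        have "D2 f ` \<Omega> = (\<lambda>x. D2 (\<phi> s) x - D2 (\<phi> 0) x) ` \<Omega>" using D2f by (rule image_cong[OF refl])
        thus ?thesis using bounded_minus_comp[OF b3] by simp
      qed
      have "norm (\<phi> s x - x) \<le> \<delta> \<and> norm (D1 (\<phi> s) x - id_blinfun) \<le> 1/2" if x: "x \<in> \<Omega>" for x
      proof -
        have "norm (f x) \<le> normC2 \<Omega> f \<and> norm (D1 f x) \<le> normC2 \<Omega> f"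
          by (rule normC2_bound[OF x bf bD1 bD2])
        moreover have "f x = \<phi> s x - x" using id0 x unfolding f_def by simp
        moreover have "D1 f x = D1 (\<phi> s) x - id_blinfun" using D1f[OF x] D1_id[OF o\<Omega> x id0] by simp
        ultimately show ?thesis using n unfolding \<eta>_def by auto
      qed
      thus ?thesis using dfs by auto
    qed
  qed
  show ?thesis
  proof (intro bexI[OF _ T0] ballI)
    fix T1 assume T1: "T1 \<in> {0<..T0}"
    define \<psi> where "\<psi> = (\<lambda>t y. SOME z. z \<in> \<O>1 \<and> \<phi> t z = y)"
    have P: "\<psi> t y \<in> \<O>1 \<and> \<phi> t (\<psi> t y) = y" if t: "t \<in> {0..T1}" and y: "y \<in> \<O>" for t y
    proof -
      have tt: "t \<in> {0..T0}" using t T1 by auto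
      have cb: "cball y r \<subseteq> \<O>1" using r(2) y closure_subset by blast
      have "\<exists>z\<in>\<O>1. \<phi> t z = y"
        by (rule core_ex[OF o\<Omega> O1\<Omega> assms(17), where \<delta>=\<delta>]) (use key[OF tt] r cb in \<open>auto simp: \<delta>_def\<close>)
      hence "\<exists>z. z \<in> \<O>1 \<and> \<phi> t z = y" by blast
      thus ?thesis unfolding \<psi>_def by (rule someI_ex)
    qed
    have Q: "\<O>0 \<subseteq> \<psi> t ` \<O>" if t: "t \<in> {0..T1}" for t
    proof
      fix x assume x: "x \<in> \<O>0"
      have tt: "t \<in> {0..T0}" using t T1 by auto
      have x1: "x \<in> \<O>1" using x O0O1 by auto
      have "norm (\<phi> t x - x) \<le> \<delta>" using key[OF tt] x1 O1\<Omega> by auto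
      hence "\<phi> t x \<in> cball x e0" unfolding \<delta>_def by (simp add: dist_norm norm_minus_commute)
      hence y: "\<phi> t x \<in> \<O>" using e0(2) x closure_subset by blast
      have "\<psi> t (\<phi> t x) = x"
        by (rule core_inj[OF o\<Omega> O1\<Omega> assms(17), where F="\<phi> t"]) (use key[OF tt] P[OF t y] x1 in auto)
      thus "x \<in> \<psi> t ` \<O>" using y by (metis image_eqI)
    qed
    show "\<exists>\<psi> :: real \<Rightarrow> R3 \<Rightarrow> R3.
           (\<forall>t\<in>{0..T1}. \<psi> t ` \<O> \<subseteq> \<O>1) \<and>
           (\<forall>t\<in>{0..T1}. \<forall>x\<in>\<O>. x = \<phi> t (\<psi> t x)) \<and>
           (\<forall>t\<in>{0..T1}. \<O>0 \<subseteq> \<psi> t ` \<O>)"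
      using P Q by (intro exI[of _ \<psi>]) auto
  qed
qed

end
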